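(* Let $\varepsilon\in\{1,-1\}$ and let $w$ be a positive integer. If $T'_n(\varepsilon)\equiv 1 \pmod{p^w}$, then for every integer $m\ge 2$, $$\frac{T^{(m)}_n(\varepsilon)\, p^m}{m!}\equiv 0 \pmod{p^{w+2}}$$ (here $T^{(m)}_n(\varepsilon)/m!$ is an integer).
   Context: $p$ is a prime with $p>3$ and $n>1$ is an integer with $\gcd(n,p)=\gcd(n,p^2-1)=1$. $T_n(x)\in\mathbb{Z}[x]$ is the Chebyshev polynomial of the first kind: $T_0=1$, $T_1=x$, $T_d=2xT_{d-1}-T_{d-2}$. $T^{(m)}_n$ is its $m$-th derivative and $T'_n=T^{(1)}_n$. *)

theory Defs
  imports "HOL-Computational_Algebra.Polynomial" "HOL-Number_Theory.Cong"
begin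

fun cheb_T :: "nat \<Rightarrow> int poly" where
  "cheb_T 0 = 1"
| "cheb_T (Suc 0) = [:0, 1:]"
| "cheb_T (Suc (Suc d)) = [:0, 2:] * cheb_T (Suc d) - cheb_T d"

end

theory Submission
  imports Defs
begin


definition XX :: "int poly" where "XX = [:0, 1:]"

lemma two_XX: "[:0, 2:] = 2 * XX"
  unfolding XX_def by (metis mult.right_neutral mult_2 one_pCons add_pCons add_0 one_add_one)

lemma cheb_rec: "cheb_T (Suc (Suc d)) = 2 * XX * cheb_T (Suc d) - cheb_T d"
  by (simp add: two_XX)

lemma cheb_1: "cheb_T (Suc 0) = XX" by (simp add: XX_def)

lemma pderiv_XX: "pderiv XX = 1"
  by (simp add: XX_def pderiv_pCons one_pCons)

lemma poly_XX[simp]: "poly XX x = x"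
  by (simp add: XX_def)

declare cheb_T.simps(2,3)[simp del]

lemma F_step:
  fixes x a b c da db :: "'a::comm_ring_1"
  assumes "(1 - x^2) * da = k * (x * a - b)"
      and "(1 - x^2) * db = (k+1) * (x * b - (2*x*b - a))"
  shows "(1 - x^2) * (2*b + 2*x*db - da) = (k+2) * (x * (2*x*b - a) - (2*x*(2*x*b - a) - b))"
proof -
  have "(1 - x^2) * (2*b + 2*x*db - da) = 2*(1-x^2)*b + 2*x*((1 - x^2) * db) - (1 - x^2) * da"
    by (simp add: algebra_simps)
  also have "\<dots> = 2*(1-x^2)*b + 2*x*((k+1) * (x * b - (2*x*b - a))) - k * (x * a - b)"
    using assms by simp
  also have "\<dots> = (k+2) * (x * (2*x*b - a) - (2*x*(2*x*b - a) - b))"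
    by (simp add: algebra_simps power2_eq_square)
  finally show ?thesis .
qed

lemma F_both: "(1 - XX^2) * pderiv (cheb_T n) = of_nat n * (XX * cheb_T n - cheb_T (Suc n))
   \<and> (1 - XX^2) * pderiv (cheb_T (Suc n)) = of_nat (Suc n) * (XX * cheb_T (Suc n) - cheb_T (Suc (Suc n)))"
proof (induction n)
  case 0
  show ?case
    by (simp add: cheb_rec cheb_1 pderiv_XX pderiv_diff pderiv_mult algebra_simps power2_eq_square)
next
  case (Suc n)
  have d: "pderiv (2 * XX * cheb_T (Suc n) - cheb_T n) = 2 * cheb_T (Suc n) + 2 * XX * pderiv (cheb_T (Suc n)) - pderiv (cheb_T n)"
    by (simp add: pderiv_diff pderiv_mult pderiv_XX algebra_simps)
  have "(1 - XX^2) * pderiv (cheb_T (Suc (Suc n))) = of_nat (Suc (Suc n)) * (XX * cheb_T (Suc (Suc n)) - cheb_T (Suc (Suc (Suc n))))"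
    unfolding cheb_rec[of "Suc n"] cheb_rec[of n] d
    using F_step[of XX "pderiv (cheb_T n)" "of_nat n" "cheb_T n" "cheb_T (Suc n)" "pderiv (cheb_T (Suc n))"] Suc.IH
    unfolding cheb_rec[of n] by (simp add: add.commute add.left_commute)
  with Suc.IH show ?case by simp
qed

lemma ode0: "(1 - XX^2) * (pderiv (pderiv (cheb_T n))) - XX * pderiv (cheb_T n) + of_nat (n^2) * cheb_T n = 0"
proof -
  let ?T = "cheb_T n" and ?S = "cheb_T (Suc n)"
  have F: "(1 - XX^2) * pderiv ?T = of_nat n * (XX * ?T - ?S)"
   and H: "(1 - XX^2) * pderiv ?S = of_nat (Suc n) * (?T - XX * ?S)"
  proof -
    show "(1 - XX^2) * pderiv ?T = of_nat n * (XX * ?T - ?S)" using F_both[of n] by simp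
    have "(1 - XX^2) * pderiv ?S = of_nat (Suc n) * (XX * ?S - (2 * XX * ?S - ?T))"
      using F_both[of n] unfolding cheb_rec by simp
    thus "(1 - XX^2) * pderiv ?S = of_nat (Suc n) * (?T - XX * ?S)" by (simp add: algebra_simps)
  qed
  have dF: "(1 - XX^2) * pderiv (pderiv ?T) - 2 * XX * pderiv ?T = of_nat n * (?T + XX * pderiv ?T - pderiv ?S)"
  proof -
    have "pderiv ((1 - XX^2) * pderiv ?T) = pderiv (of_nat n * (XX * ?T - ?S))" using F by simp
    thus ?thesis
      by (simp add: pderiv_diff pderiv_mult pderiv_XX power2_eq_square algebra_simps pderiv_of_nat)
  qed
  have "(1 - XX^2) * ((1 - XX^2) * (pderiv (pderiv ?T)) - XX * pderiv ?T + of_nat (n^2) * ?T) = 0"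
  proof -
    have "(1 - XX^2) * ((1 - XX^2) * (pderiv (pderiv ?T)) - XX * pderiv ?T + of_nat (n^2) * ?T)
       = (1 - XX^2) * ((1 - XX^2) * pderiv (pderiv ?T) - 2 * XX * pderiv ?T) + XX * ((1 - XX^2) * pderiv ?T)
         + of_nat (n^2) * (1 - XX^2) * ?T"
      by (simp add: algebra_simps)
    also have "\<dots> = (1 - XX^2) * (of_nat n * (?T + XX * pderiv ?T - pderiv ?S)) + XX * (of_nat n * (XX * ?T - ?S))
         + of_nat (n^2) * (1 - XX^2) * ?T" using dF F by simp
    also have "\<dots> = of_nat n * (1 - XX^2) * ?T + of_nat n * XX * ((1 - XX^2) * pderiv ?T) - of_nat n * ((1 - XX^2) * pderiv ?S) + XX * (of_nat n * (XX * ?T - ?S))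
         + of_nat (n^2) * (1 - XX^2) * ?T" by (simp add: algebra_simps)
    also have "\<dots> = 0" unfolding F H by (simp add: algebra_simps power2_eq_square)
    finally show ?thesis .
  qed
  moreover have "(1 - XX^2) \<noteq> 0"
  proof
    assume "1 - XX^2 = 0"
    hence "poly (1 - XX^2) 2 = 0" by simp
    thus False by simp
  qed
  ultimately show ?thesis by simp
qed

lemma odeN: "(1 - XX^2) * (pderiv ^^ (Suc (Suc m))) (cheb_T n) - of_nat (2*m+1) * XX * (pderiv ^^ (Suc m)) (cheb_T n)
   + (of_nat (n^2) - of_nat (m^2)) * (pderiv ^^ m) (cheb_T n) = 0"
proof (induction m)
  case 0
  then show ?case using ode0[of n] by simp
next
  case (Suc m)
  let ?D = "\<lambda>k. (pderiv ^^ k) (cheb_T n)"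
  have "pderiv ((1 - XX^2) * ?D (Suc (Suc m)) - of_nat (2*m+1) * XX * ?D (Suc m)
   + (of_nat (n^2) - of_nat (m^2)) * ?D m) = 0" using Suc.IH by simp
  hence "(1 - XX^2) * ?D (Suc (Suc (Suc m))) - 2 * XX * ?D (Suc (Suc m)) - of_nat (2*m+1) * XX * ?D (Suc (Suc m))
     - of_nat (2*m+1) * ?D (Suc m) + (of_nat (n^2) - of_nat (m^2)) * ?D (Suc m) = 0"
    by (simp add: pderiv_diff pderiv_add pderiv_mult pderiv_XX pderiv_of_nat power2_eq_square algebra_simps)
  moreover have "(of_nat (Suc m ^ 2) :: int poly) = of_nat (m^2) + of_nat (2*m+1)"
    by (simp add: power2_eq_square)
  ultimately show ?case
    by (simp add: algebra_simps)
qed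

lemma cheb_eps: "\<epsilon> \<in> {1, -1} \<Longrightarrow> poly (cheb_T n) \<epsilon> = \<epsilon> ^ n \<and> poly (cheb_T (Suc n)) \<epsilon> = \<epsilon> ^ Suc n"
proof (induction n)
  case 0
  then show ?case by (simp add: cheb_1)
next
  case (Suc n)
  have e2: "\<epsilon> * \<epsilon> = 1" using Suc.prems by auto
  have "poly (cheb_T (Suc (Suc n))) \<epsilon> = 2 * \<epsilon> * \<epsilon> ^ Suc n - \<epsilon> ^ n"
    using Suc by (simp add: cheb_rec)
  also have "\<dots> = \<epsilon> ^ n * (2 * (\<epsilon> * \<epsilon>) - 1)" by (simp add: algebra_simps)
  also have "\<dots> = \<epsilon> ^ Suc (Suc n)" using e2 by (simp add: algebra_simps)
  finally show ?case using Suc by simp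
qed

lemma aux_eps: assumes "e*e = (1::int)" "k*e*a = d*b" shows "k*a = e*d*b"
proof -
  have "e*(k*e*a) = (e*e)*(k*a)" by (simp only: ac_simps)
  hence "k*a = e*(k*e*a)" using assms(1) by simp
  also have "\<dots> = e*(d*b)" using assms(2) by simp
  finally show ?thesis by (simp only: mult.assoc)
qed

lemma rec_eval:
  assumes "\<epsilon> \<in> {1, -1}"
  shows "of_nat (2*m+1) * poly ((pderiv ^^ (Suc m)) (cheb_T n)) \<epsilon>
       = \<epsilon> * (int (n^2) - int (m^2)) * poly ((pderiv ^^ m) (cheb_T n)) \<epsilon>"
proof -
  have e2: "\<epsilon> * \<epsilon> = 1" using assms by auto
  have "poly ((1 - XX^2) * (pderiv ^^ (Suc (Suc m))) (cheb_T n) - of_nat (2*m+1) * XX * (pderiv ^^ (Suc m)) (cheb_T n)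
   + (of_nat (n^2) - of_nat (m^2)) * (pderiv ^^ m) (cheb_T n)) \<epsilon> = 0"
    using odeN by simp
  hence "of_nat (2*m+1) * \<epsilon> * poly ((pderiv ^^ (Suc m)) (cheb_T n)) \<epsilon>
       = (int (n^2) - int (m^2)) * poly ((pderiv ^^ m) (cheb_T n)) \<epsilon>"
    using e2 by (simp add: power2_eq_square of_nat_poly)
  thus ?thesis using aux_eps[OF e2] by blast
qed

lemma coeff_funpow_pderiv:
  "of_nat (fact j) * coeff ((pderiv ^^ m) P) j = of_nat (fact (j+m)) * coeff (P :: int poly) (j+m)"
proof (induction m arbitrary: j)
  case 0
  then show ?case by simp
next
  case (Suc m)
  have "of_nat (fact j) * coeff ((pderiv ^^ Suc m) P) j = of_nat (fact j) * (of_nat (Suc j) * coeff ((pderiv ^^ m) P) (Suc j))"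
    by (simp add: coeff_pderiv)
  also have "\<dots> = of_nat (fact (Suc j)) * coeff ((pderiv ^^ m) P) (Suc j)"
    by (simp add: algebra_simps)
  also have "\<dots> = of_nat (fact (Suc j + m)) * coeff P (Suc j + m)" by (rule Suc.IH)
  finally show ?case by simp
qed

lemma fact_dvd_coeff: "(fact m :: int) dvd coeff ((pderiv ^^ m) P) j"
proof -
  have "fact j * fact m dvd (fact (j+m) :: int)"
    by (metis fact_fact_dvd_fact of_nat_dvd_iff of_nat_fact of_nat_mult)
  hence "fact j * fact m dvd (fact j :: int) * coeff ((pderiv ^^ m) P) j"
    using coeff_funpow_pderiv[of j m P] by (metis dvd_mult2 of_nat_fact)
  thus ?thesis by (simp add: fact_nonzero)
qed

lemma fact_dvd_poly: "(fact m :: int) dvd poly ((pderiv ^^ m) P) x"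
  unfolding poly_altdef by (intro dvd_sum dvd_mult2 fact_dvd_coeff)



lemma mult_fact_rec:
  fixes p N :: nat assumes p: "prime p"
  shows "multiplicity p (fact N :: nat) = N div p + multiplicity p (fact (N div p) :: nat)"
proof (induction N)
  case 0
  then show ?case by simp
next
  case (Suc N)
  have p1: "p > 1" using p prime_gt_1_nat by blast
  have ms: "multiplicity p (fact (Suc N) :: nat) = multiplicity p (Suc N) + multiplicity p (fact N :: nat)"
  proof -
    have "(fact (Suc N) :: nat) = Suc N * fact N" by (simp only: fact_Suc of_nat_id)
    thus ?thesis using p by (simp only: prime_elem_multiplicity_mult_distrib prime_imp_prime_elem fact_nonzero Suc_neq_Zero simp_thms)
  qed
  show ?case
  proof (cases "p dvd Suc N")
    case False
    hence "Suc N mod p \<noteq> 0" by (simp add: dvd_eq_mod_eq_0)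
    hence "Suc N div p = N div p" by (simp add: div_Suc)
    moreover have "multiplicity p (Suc N) = 0" using False by (rule not_dvd_imp_multiplicity_0)
    ultimately show ?thesis using ms Suc.IH by simp
  next
    case True
    then obtain q where q: "Suc N = p * q" by blast
    have q0: "q > 0" using q by (cases q) auto
    have qd: "Suc N div p = q" using q p1 by simp
    have "Suc N mod p = 0" using True by simp
    hence "Suc N div p = Suc (N div p)" by (simp add: div_Suc)
    hence qN: "N div p = q - 1" using qd by simp
    have m1: "multiplicity p (Suc N) = Suc (multiplicity p q)"
    proof -
      have nu: "\<not> is_unit p" using p1 by simp
      have "multiplicity p (p * q) = Suc (multiplicity p q)"
        by (rule multiplicity_times_same[of q p]) (use q0 p1 nu in auto)
      thus ?thesis by (simp only: q)
    qed
    have "fact q = q * (fact (q - 1) :: nat)" using q0 by (cases q) simp_all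
    hence m2: "multiplicity p (fact q :: nat) = multiplicity p q + multiplicity p (fact (q-1) :: nat)"
      using p q0 by (simp add: prime_elem_multiplicity_mult_distrib)
    show ?thesis using ms Suc.IH m1 m2 qd qN q0 by simp
  qed
qed

lemma legendre_bound:
  fixes p N :: nat assumes p: "prime p" and "N \<ge> 1"
  shows "multiplicity p (fact N :: nat) * (p - 1) \<le> N - 1"
  using assms(2)
proof (induction N rule: less_induct)
  case (less N)
  have p1: "p > 1" using p prime_gt_1_nat by blast
  define q where "q = N div p"
  have rec: "multiplicity p (fact N :: nat) = q + multiplicity p (fact q :: nat)"
    unfolding q_def by (rule mult_fact_rec[OF p])
  show ?case
  proof (cases "q = 0")
    case True
    then show ?thesis using rec by simp
  next
    case False
    have qN: "q < N" unfolding q_def using p1 less.prems by simp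
    have IH: "multiplicity p (fact q :: nat) * (p - 1) \<le> q - 1" using less.IH[OF qN] False by simp
    have qp: "q * p \<le> N" unfolding q_def by (simp add: div_times_less_eq_dividend)
    have "multiplicity p (fact N :: nat) * (p - 1) = q * (p - 1) + multiplicity p (fact q :: nat) * (p - 1)"
      using rec by (simp add: algebra_simps)
    also have "\<dots> \<le> q * (p - 1) + (q - 1)" using IH by simp
    also have "\<dots> = q * p - 1" using False p1 by (simp add: algebra_simps diff_mult_distrib2)
    also have "\<dots> \<le> N - 1" using qp by simp
    finally show ?thesis .
  qed
qed



theorem lemma2:
  fixes p n w m :: nat and \<epsilon> :: int
  assumes "prime p" and "p > 3" and "n > 1"
    and "gcd n p = 1" and "gcd n (p^2 - 1) = 1"
    and "\<epsilon> \<in> {1, -1}" and "w > 0"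
    and "[poly (pderiv (cheb_T n)) \<epsilon> = 1] (mod (int p ^ w))"
    and "m \<ge> 2"
  shows "[poly ((pderiv ^^ m) (cheb_T n)) \<epsilon> div fact m * int p ^ m = 0] (mod (int p ^ (w + 2)))"
proof -
  define c where "c k = poly ((pderiv ^^ k) (cheb_T n)) \<epsilon>" for k
  define a where "a k = c k div fact k" for k
  have ca: "c k = fact k * a k" for k
    using fact_dvd_poly[of k "cheb_T n" \<epsilon>] unfolding a_def c_def by simp
  have e2: "\<epsilon> * \<epsilon> = 1" using assms(6) by auto
  have rc: "of_nat (2*k+1) * c (Suc k) = \<epsilon> * (int (n^2) - int (k^2)) * c k" for k
    using rec_eval[OF assms(6)] unfolding c_def by simp
  have ra: "of_nat (2*k+1) * of_nat (Suc k) * a (Suc k) = \<epsilon> * (int (n^2) - int (k^2)) * a k" for k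
  proof -
    have "fact k * (of_nat (2*k+1) * of_nat (Suc k) * a (Suc k)) = fact k * (\<epsilon> * (int (n^2) - int (k^2)) * a k)"
      using rc[of k] unfolding ca[of k] ca[of "Suc k"] by (simp add: fact_Suc algebra_simps)
    thus ?thesis by (simp add: fact_nonzero)
  qed
  have oddp: "odd p" using prime_odd_nat assms(1,2) by simp
  have evp: "even (p^2 - 1)" using oddp by (simp add: even_diff_nat)
  have oddn: "odd n"
  proof
    assume "even n"
    hence "2 dvd gcd n (p^2 - 1)" using evp by (intro gcd_greatest)
    hence "(2::nat) dvd 1" unfolding assms(5) .
    thus False by simp
  qed
  then obtain j where nj: "n = 2*j+1" using oddE by blast
  have en: "\<epsilon> ^ Suc n = 1"
  proof -
    have "\<epsilon> ^ Suc n = (\<epsilon> * \<epsilon>) ^ Suc j" unfolding nj by (simp add: power_mult_distrib mult_2 power_add)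
    thus ?thesis using e2 by simp
  qed
  have c0: "c 0 = \<epsilon> ^ n" using cheb_eps[OF assms(6), of n] unfolding c_def by simp
  have c1: "c 1 = int (n^2)"
  proof -
    have "c 1 = \<epsilon> * int (n^2) * \<epsilon> ^ n" using rc[of 0] c0 by simp
    also have "\<dots> = int (n^2) * \<epsilon> ^ Suc n" by (simp add: algebra_simps)
    finally show ?thesis using en by simp
  qed
  have "c 1 = poly (pderiv (cheb_T n)) \<epsilon>" unfolding c_def by simp
  hence "[int (n^2) = 1] (mod (int p ^ w))" using assms(8) c1 by simp
  hence pw: "int p ^ w dvd int (n^2) - 1" by (simp add: cong_iff_dvd_diff)
  have Q: "int p ^ w dvd a k * fact (2*k)" if "k \<ge> 2" for k
    using that
  proof (induction k rule: dec_induct)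
    case base
    have f4: "(fact (2*2) :: int) = 24" by (simp add: numeral_eq_Suc)
    have "a 2 * fact (2*2) = 4 * (of_nat (2*1+1) * of_nat (Suc 1) * a (Suc 1))"
      unfolding f4 by (simp add: numeral_eq_Suc)
    also have "\<dots> = 4 * \<epsilon> * a 1 * (int (n^2) - 1)" unfolding ra by simp
    finally show ?case using pw by simp
  next
    case (step k)
    have "(fact (2 * Suc k) :: int) = of_nat (2*k+1) * of_nat (Suc k) * 2 * fact (2*k)"
      by (simp add: fact_Suc algebra_simps)
    hence "a (Suc k) * fact (2 * Suc k) = 2 * (of_nat (2*k+1) * of_nat (Suc k) * a (Suc k)) * fact (2*k)"
      by (simp add: algebra_simps)
    also have "\<dots> = 2 * \<epsilon> * (int (n^2) - int (k^2)) * (a k * fact (2*k))" unfolding ra by (simp add: algebra_simps)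
    finally have eq: "a (Suc k) * fact (2 * Suc k) = 2 * \<epsilon> * (int (n^2) - int (k^2)) * (a k * fact (2*k))" .
    show ?case unfolding eq using step.IH by (rule dvd_mult)
  qed
  define v where "v = multiplicity p (fact (2*m) :: nat)"
  obtain u where u: "(fact (2*m) :: nat) = p ^ v * u" "\<not> p dvd u"
  proof -
    have "(fact (2*m) :: nat) \<noteq> 0" by simp
    moreover have "\<not> is_unit p" using assms(2) by simp
    ultimately show ?thesis using multiplicity_decompose'[of "fact (2*m) :: nat" p] that unfolding v_def by blast
  qed
  have "v * (p - 1) \<le> 2*m - 1" unfolding v_def using legendre_bound[OF assms(1), of "2*m"] assms(9) by simp
  moreover have "4 * v \<le> v * (p - 1)"
  proof -
    have "4 \<le> p - 1" using assms(2) oddp by presburger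
    thus ?thesis by (simp add: mult.commute)
  qed
  ultimately have vm: "v + 2 \<le> m" using assms(9) by linarith
  have "coprime p u" using prime_imp_coprime[OF assms(1) u(2)] .
  hence cop: "coprime (int p ^ w) (int u)" by simp
  have "int p ^ w dvd a m * (int p ^ v * int u)"
    using Q[OF assms(9)] u(1) by (metis of_nat_fact of_nat_mult of_nat_power)
  hence "int p ^ w dvd (a m * int p ^ v) * int u" by (simp add: mult.assoc)
  hence d1: "int p ^ w dvd a m * int p ^ v" using cop by (simp add: coprime_dvd_mult_left_iff)
  have "int p ^ (w + 2) dvd int p ^ w * int p ^ (m - v)"
  proof -
    have "int p ^ (w + 2) dvd int p ^ (w + (m - v))" using vm by (intro le_imp_power_dvd) simp
    thus ?thesis by (simp only: power_add)
  qed
  also have "\<dots> dvd (a m * int p ^ v) * int p ^ (m - v)" using d1 by (rule mult_dvd_mono) simp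
  also have "(a m * int p ^ v) * int p ^ (m - v) = a m * int p ^ m"
    using vm by (simp add: mult.assoc power_add[symmetric])
  finally show ?thesis unfolding cong_0_iff a_def c_def .
qed

end
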